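(* Let $b\ge 0$ and $h\ge 2b+1$ be integers, let $H$ be a set of $h$ vertices, and fix $\beta>0$. Let $M^1$ and $M^2$ be any two transition matrices (as defined in the context). Then the product $M^1M^2$ has a column containing at least $b+1$ strictly positive entries.
   Context: A reduced graph on $H$ is a directed graph obtained from the complete directed graph (without self-loops) on $H$ by deleting, for each vertex, an arbitrary set of $b$ of its incoming edges. A transition matrix is an $h\times h$ row-stochastic matrix $M$ with nonnegative real entries, rows and columns indexed by $H$, for which there is a reduced graph $R$ on $H$ such that $M_{ij}\ge\beta$ whenever $j=i$ or $(j,i)$ is an edge of $R$. (This models one phase of $D$ iterations of the Relay-IABC protocol: honest node $i$'s new state is a weighted combination, with weights at least $\beta$, of its own state and the states of its in-neighbors in the reduced graph remaining after trimming.) *)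

theory Defs
  imports Complex_Main
begin

text \<open>Matrices with rows and columns indexed by the finite set H are modelled as
  functions of type 'a => 'a => real; only entries with indices in H matter.
  Edges of a directed graph are pairs (j, i) meaning j -> i.\<close>

definition reduced_graph :: "'a set \<Rightarrow> nat \<Rightarrow> ('a \<times> 'a) set \<Rightarrow> bool" where
  "reduced_graph H b R \<longleftrightarrow>
     R \<subseteq> {(j, i). j \<in> H \<and> i \<in> H \<and> j \<noteq> i} \<and>
     (\<forall>i\<in>H. card {j \<in> H. j \<noteq> i \<and> (j, i) \<notin> R} = b)"

definition transition_matrix :: "'a set \<Rightarrow> nat \<Rightarrow> real \<Rightarrow> ('a \<Rightarrow> 'a \<Rightarrow> real) \<Rightarrow> bool" where
  "transition_matrix H b \<beta> M \<longleftrightarrow>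
     (\<forall>i\<in>H. \<forall>j\<in>H. 0 \<le> M i j) \<and>
     (\<forall>i\<in>H. (\<Sum>j\<in>H. M i j) = 1) \<and>
     (\<exists>R. reduced_graph H b R \<and>
        (\<forall>i\<in>H. \<forall>j\<in>H. (j = i \<or> (j, i) \<in> R) \<longrightarrow> \<beta> \<le> M i j))"

definition mat_prod :: "'a set \<Rightarrow> ('a \<Rightarrow> 'a \<Rightarrow> real) \<Rightarrow> ('a \<Rightarrow> 'a \<Rightarrow> real) \<Rightarrow> 'a \<Rightarrow> 'a \<Rightarrow> real" where
  "mat_prod H A B i j = (\<Sum>k\<in>H. A i k * B k j)"

end

theory Submission
  imports Defs
begin

lemma rowcard:
  assumes "finite H" "transition_matrix H b \<beta> M" "i \<in> H"
  shows "card H \<le> card {j\<in>H. \<beta> \<le> M i j} + b"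
proof -
  obtain R where R: "reduced_graph H b R"
    and big: "\<forall>i\<in>H. \<forall>j\<in>H. (j = i \<or> (j, i) \<in> R) \<longrightarrow> \<beta> \<le> M i j"
    using assms(2) unfolding transition_matrix_def by blast
  define B where "B = {j \<in> H. j \<noteq> i \<and> (j, i) \<notin> R}"
  have cB: "card B = b" using R assms(3) unfolding reduced_graph_def B_def by blast
  have BH: "B \<subseteq> H" unfolding B_def by blast
  have sub: "H - B \<subseteq> {j\<in>H. \<beta> \<le> M i j}" using big assms(3) unfolding B_def by auto
  have "card (H - B) \<le> card {j\<in>H. \<beta> \<le> M i j}"
    by (rule card_mono) (use assms(1) sub in auto)
  moreover have "card (H - B) = card H - b" using card_Diff_subset[OF finite_subset[OF BH assms(1)] BH] cB by simp
  ultimately show ?thesis by linarith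
qed

theorem lemma2:
  fixes H :: "'a set" and b h :: nat and \<beta> :: real
    and M1 M2 :: "'a \<Rightarrow> 'a \<Rightarrow> real"
  assumes "finite H" and "card H = h" and "h \<ge> 2 * b + 1"
    and "\<beta> > 0"
    and "transition_matrix H b \<beta> M1"
    and "transition_matrix H b \<beta> M2"
  shows "\<exists>j\<in>H. card {i \<in> H. mat_prod H M1 M2 i j > 0} \<ge> b + 1"
proof -
  have col: "\<exists>j\<in>H. b + 1 \<le> card {k\<in>H. \<beta> \<le> M2 k j}"
  proof (rule ccontr)
    assume "\<not> ?thesis"
    hence le: "\<And>j. j \<in> H \<Longrightarrow> card {k\<in>H. \<beta> \<le> M2 k j} \<le> b" by force
    have "(\<Sum>j\<in>H. card {k\<in>H. \<beta> \<le> M2 k j}) \<le> (\<Sum>j\<in>H. b)"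
      by (rule sum_mono) (rule le)
    hence s1: "(\<Sum>j\<in>H. card {k\<in>H. \<beta> \<le> M2 k j}) \<le> h * b" using assms(2) by simp
    have "(\<Sum>k\<in>H. h - b) \<le> (\<Sum>k\<in>H. card {j\<in>H. \<beta> \<le> M2 k j})"
      by (rule sum_mono) (use rowcard[OF assms(1) assms(6)] assms(2) in force)
    hence s2: "h * (h - b) \<le> (\<Sum>k\<in>H. card {j\<in>H. \<beta> \<le> M2 k j})" using assms(2) by simp
    have "(\<Sum>j\<in>H. card {k\<in>H. \<beta> \<le> M2 k j}) = (\<Sum>j\<in>H. \<Sum>k\<in>H. if \<beta> \<le> M2 k j then 1 else 0)"
      using assms(1) by (simp add: sum.If_cases Int_def)
    also have "\<dots> = (\<Sum>k\<in>H. \<Sum>j\<in>H. if \<beta> \<le> M2 k j then 1 else 0)" by (rule sum.swap)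
    also have "\<dots> = (\<Sum>k\<in>H. card {j\<in>H. \<beta> \<le> M2 k j})"
      using assms(1) by (simp add: sum.If_cases Int_def)
    finally have "h * (h - b) \<le> h * b" using s1 s2 by linarith
    moreover have "h * b < h * (h - b)" using assms(3) by simp
    ultimately show False by simp
  qed
  then obtain j where j: "j \<in> H" and cj: "b + 1 \<le> card {k\<in>H. \<beta> \<le> M2 k j}" by blast
  have nn1: "\<forall>i\<in>H. \<forall>j\<in>H. 0 \<le> M1 i j" and nn2: "\<forall>i\<in>H. \<forall>j\<in>H. 0 \<le> M2 i j"
    using assms(5,6) unfolding transition_matrix_def by auto
  have all: "mat_prod H M1 M2 i j > 0" if i: "i \<in> H" for i
  proof -
    let ?A = "{k\<in>H. \<beta> \<le> M1 i k}" and ?C = "{k\<in>H. \<beta> \<le> M2 k j}"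
    have cA: "card H \<le> card ?A + b" by (rule rowcard[OF assms(1) assms(5) i])
    have "card (?A \<union> ?C) \<le> card H" by (rule card_mono) (use assms(1) in auto)
    moreover have "card (?A \<union> ?C) + card (?A \<inter> ?C) = card ?A + card ?C"
      using card_Un_Int[of ?A ?C] assms(1) by simp
    ultimately have "card (?A \<inter> ?C) > 0" using cA cj by linarith
    then obtain k where k: "k \<in> ?A \<inter> ?C" by (metis card_gt_0_iff ex_in_conv)
    have pos: "M1 i k * M2 k j > 0" using k assms(4) by (auto intro!: mult_pos_pos)
    have "M1 i k * M2 k j \<le> (\<Sum>k\<in>H. M1 i k * M2 k j)"
      by (rule member_le_sum) (use k nn1 nn2 i j assms(1) in auto)
    thus ?thesis using pos unfolding mat_prod_def by linarith
  qed
  have "{i \<in> H. mat_prod H M1 M2 i j > 0} = H" using all by auto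
  hence "card {i \<in> H. mat_prod H M1 M2 i j > 0} \<ge> b + 1" using assms(2,3) by simp
  thus ?thesis using j by blast
qed

end
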